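(* Let $N\ge 2$ and let $y_i,r_i$ ($1\le i\le N$) be real constants with $0\le|r_1|\le|r_2|\le\dots\le|r_{N-1}|\le r_N$. For integers $j$ let $\bm{x}_j=(|y_1+jr_1|,\dots,|y_N+jr_N|)^T\in\mathbb{R}^N$ and $\tilde{\bm{x}}_j=(|y_1+jr_1|,\dots,|y_{N-1}+jr_{N-1}|)^T\in\mathbb{R}^{N-1}$. Then for all integers $j_1<j_2<\dots<j_N$, \[ \max[\bm{x}_{j_1}\ \bm{x}_{j_2}\ \dots\ \bm{x}_{j_N}]=\max\Bigl(y_N+j_Nr_N+\max[\tilde{\bm{x}}_{j_1}\ \dots\ \tilde{\bm{x}}_{j_{N-1}}],\ -y_N-j_1r_N+\max[\tilde{\bm{x}}_{j_2}\ \dots\ \tilde{\bm{x}}_{j_N}]\Bigr). \]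
   Context: Ultradiscrete permanent (UP): for a real $n\times n$ matrix $A=(a_{ij})$, $\max A\equiv\max_{\pi}\sum_{i=1}^n a_{i\pi(i)}$ over all permutations $\pi$ of $\{1,\dots,n\}$; $\max[\bm{b}_1\ \dots\ \bm{b}_n]$ denotes the UP of the matrix with columns $\bm{b}_1,\dots,\bm{b}_n$. *)

theory Defs
  imports Complex_Main "HOL-Combinatorics.Permutations"
begin

text \<open>Ultradiscrete permanent of the n x n matrix A, rows and columns indexed by 1..n;
  A i k is the entry in row i, column k.\<close>
definition up :: "nat \<Rightarrow> (nat \<Rightarrow> nat \<Rightarrow> real) \<Rightarrow> real" where
  "up n A = Max ((\<lambda>p. \<Sum>i\<in>{1..n}. A i (p i)) ` {p. p permutes {1..n}})"

end

theory Submission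
  imports Defs
begin

lemma up_ge:
  assumes "p permutes {1..n}"
  shows "(\<Sum>i\<in>{1..n}. A i (p i)) \<le> up n A"
  unfolding up_def
  by (rule Max_ge) (use assms finite_permutations[of "{1..n::nat}"] in auto)

lemma up_att:
  "\<exists>p. p permutes {1..n} \<and> up n A = (\<Sum>i\<in>{1..n}. A i (p i))"
proof -
  have "finite ((\<lambda>p. \<Sum>i\<in>{1..n}. A i (p i)) ` {p. p permutes {1..n}})"
    using finite_permutations[of "{1..n::nat}"] by auto
  moreover have "(\<lambda>p. \<Sum>i\<in>{1..n}. A i (p i)) ` {p. p permutes {1..n}} \<noteq> {}"
    using permutes_id by blast
  ultimately have "up n A \<in> (\<lambda>p. \<Sum>i\<in>{1..n}. A i (p i)) ` {p. p permutes {1..n}}"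
    unfolding up_def by (rule Max_in)
  then show ?thesis by auto
qed

lemma abs_diff_le: fixes y b c r :: real shows "\<bar>y + b * r\<bar> - \<bar>y + c * r\<bar> \<le> \<bar>r\<bar> * \<bar>b - c\<bar>"
proof -
  have "\<bar>y + b * r\<bar> - \<bar>y + c * r\<bar> \<le> \<bar>(y + b*r) - (y + c*r)\<bar>" by (rule abs_triangle_ineq2)
  also have "\<dots> = \<bar>r\<bar> * \<bar>b - c\<bar>" by (simp add: abs_mult[symmetric] algebra_simps)
  finally show ?thesis .
qed

theorem lemma3:
  fixes N :: nat and y r :: "nat \<Rightarrow> real" and j :: "nat \<Rightarrow> int"
  assumes "N \<ge> 2"
    and "\<forall>i. 1 \<le> i \<and> i < N - 1 \<longrightarrow> \<bar>r i\<bar> \<le> \<bar>r (Suc i)\<bar>"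
    and "\<bar>r (N - 1)\<bar> \<le> r N"
    and "\<forall>k. 1 \<le> k \<and> k < N \<longrightarrow> j k < j (Suc k)"
  shows "up N (\<lambda>i k. \<bar>y i + of_int (j k) * r i\<bar>) =
    max (y N + of_int (j N) * r N + up (N - 1) (\<lambda>i k. \<bar>y i + of_int (j k) * r i\<bar>))
        (- y N - of_int (j 1) * r N + up (N - 1) (\<lambda>i k. \<bar>y i + of_int (j (Suc k)) * r i\<bar>))"
proof -
  define n where "n = N - 1"
  have N: "N = Suc n" and n1: "n \<ge> 1" using assms(1) by (auto simp: n_def)
  define a where "a = (\<lambda>i k. \<bar>y i + of_int (j k) * r i\<bar>)"
  define b where "b = (\<lambda>i k. \<bar>y i + of_int (j (Suc k)) * r i\<bar>)"
  have rle: "\<bar>r i\<bar> \<le> r N" if "1 \<le> i" "i \<le> n" for i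
  proof -
    have "\<bar>r i\<bar> \<le> \<bar>r n\<bar>" using \<open>i \<le> n\<close>
    proof (induct rule: dec_induct)
      case base then show ?case by simp
    next
      case (step k)
      then have "\<bar>r k\<bar> \<le> \<bar>r (Suc k)\<bar>" using assms(2) that(1) unfolding n_def by auto
      then show ?case using step by linarith
    qed
    then show ?thesis using assms(3) unfolding n_def by simp
  qed
  have rN: "r N \<ge> 0" using assms(3) by linarith
  have jle: "j k \<le> j l" if "1 \<le> k" "k \<le> l" "l \<le> N" for k l
    using \<open>k \<le> l\<close> \<open>l \<le> N\<close>
  proof (induct rule: dec_induct)
    case base then show ?case by simp
  next
    case (step m)
    then have "j m < j (Suc m)" "j k \<le> j m" using assms(4) that(1) by auto
    then show ?case by linarith
  qed
  have key: "a i l - a i k \<le> r N * (of_int (j l) - of_int (j k))"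
    if "1 \<le> i" "i \<le> n" "1 \<le> k" "k \<le> l" "l \<le> N" for i k l
  proof -
    have "a i l - a i k \<le> \<bar>r i\<bar> * \<bar>of_int (j l) - of_int (j k)\<bar>"
      unfolding a_def by (rule abs_diff_le)
    also have "\<bar>of_int (j l) - of_int (j k)\<bar> = (of_int (j l) - of_int (j k) :: real)"
      using jle[OF that(3-5)] by simp
    also have "\<bar>r i\<bar> * (of_int (j l) - of_int (j k)) \<le> r N * (of_int (j l) - of_int (j k))"
      using rle[OF that(1,2)] jle[OF that(3-5)] by (intro mult_right_mono) auto
    finally show ?thesis .
  qed
  have splitN: "(\<Sum>i\<in>{1..N}. f i) = (\<Sum>i\<in>{1..n}. f i) + f N" for f :: "nat \<Rightarrow> real"
    unfolding N by simp
  have lb1: "y N + of_int (j N) * r N + up n a \<le> up N a"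
  proof -
    obtain p where p: "p permutes {1..n}" "up n a = (\<Sum>i\<in>{1..n}. a i (p i))"
      using up_att by blast
    have pN: "p permutes {1..N}" by (rule permutes_subset[OF p(1)]) (auto simp: N)
    have "p N = N" using p(1) by (auto simp: permutes_def N)
    have "y N + of_int (j N) * r N + up n a \<le> (\<Sum>i\<in>{1..N}. a i (p i))"
      unfolding splitN p(2) using \<open>p N = N\<close> by (simp add: a_def)
    also have "\<dots> \<le> up N a" by (rule up_ge[OF pN])
    finally show ?thesis .
  qed
  have lb2: "- y N - of_int (j 1) * r N + up n b \<le> up N a"
  proof -
    obtain p where p: "p permutes {1..n}" "up n b = (\<Sum>i\<in>{1..n}. b i (p i))"
      using up_att by blast
    define q where "q = (\<lambda>i. if i = N then 1 else if i \<in> {1..n} then Suc (p i) else i)"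
    have pin: "p i \<in> {1..n}" if "i \<in> {1..n}" for i using permutes_in_image[OF p(1)] that by blast
    have "inj_on q {1..N}"
    proof (rule inj_onI)
      fix u v assume uv: "u \<in> {1..N}" "v \<in> {1..N}" "q u = q v"
      show "u = v"
      proof (cases "u = N \<or> v = N")
        case True
        have q1: "w = N" if "w \<in> {1..N}" "q w = 1" for w
        proof (rule ccontr)
          assume "w \<noteq> N"
          then have "w \<in> {1..n}" using that(1) N by auto
          then have "q w = Suc (p w)" "p w \<ge> 1" using pin[of w] \<open>w \<noteq> N\<close> by (auto simp: q_def)
          then show False using that(2) by simp
        qed
        have "q N = 1" by (simp add: q_def)
        then show ?thesis using True uv q1 by metis
      next
        case False
        then have "u \<in> {1..n}" "v \<in> {1..n}" using uv by (auto simp: N)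
        then show ?thesis using uv(3) False permutes_inj_on[OF p(1)]
          by (auto simp: q_def inj_on_def)
      qed
    qed
    moreover have "q x \<in> {1..N}" if "x \<in> {1..N}" for x
      using that pin[of x] by (auto simp: q_def N)
    moreover have "q x = x" if "x \<notin> {1..N}" for x using that by (auto simp: q_def N)
    ultimately have qp: "q permutes {1..N}" by (intro inj_imp_permutes) auto
    have "(\<Sum>i\<in>{1..N}. a i (q i)) = (\<Sum>i\<in>{1..n}. b i (p i)) + a N 1"
      unfolding splitN by (simp add: q_def N a_def b_def)
    moreover have "- y N - of_int (j 1) * r N \<le> a N 1" by (simp add: a_def)
    ultimately have "- y N - of_int (j 1) * r N + up n b \<le> (\<Sum>i\<in>{1..N}. a i (q i))"
      using p(2) by simp
    also have "\<dots> \<le> up N a" by (rule up_ge[OF qp])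
    finally show ?thesis .
  qed
  have ub: "(\<Sum>i\<in>{1..N}. a i (p i)) \<le> max (y N + of_int (j N) * r N + up n a)
          (- y N - of_int (j 1) * r N + up n b)" if pp: "p permutes {1..N}" for p
  proof -
    define k where "k = p N"
    have k: "k \<in> {1..N}" unfolding k_def using permutes_in_image[OF pp, of N] N by simp
    have pin: "p i \<in> {1..N}" if "i \<in> {1..N}" for i using permutes_in_image[OF pp] that by blast
    have pinv: "inv p x \<in> {1..N} \<longleftrightarrow> x \<in> {1..N}" for x
      by (rule permutes_in_image[OF permutes_inv[OF pp]])
    have swp: "\<exists>q. q permutes {1..N} \<and> q N = c \<and>
        (\<Sum>i\<in>{1..n}. a i (p i)) - (\<Sum>i\<in>{1..n}. a i (q i)) = (if inv p c = N then 0 else a (inv p c) c - a (inv p c) k)"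
      if c: "c \<in> {1..N}" for c
    proof -
      define m where "m = inv p c"
      have m: "m \<in> {1..N}" "p m = c" using c pinv[of c] permutes_inverses(1)[OF pp, of c]
        by (auto simp: m_def)
      define q where "q = p \<circ> transpose N m"
      have qp: "q permutes {1..N}" unfolding q_def
        by (rule permutes_compose[OF permutes_swap_id pp]) (use m N in auto)
      have qN: "q N = c" using m by (simp add: q_def)
      show ?thesis
      proof (cases "m = N")
        case True
        then have "q = p" by (simp add: q_def)
        then show ?thesis using qp qN True m_def by auto
      next
        case False
        then have mn: "m \<in> {1..n}" using m N by auto
        have oth: "q i = p i" if "i \<noteq> m" "i \<noteq> N" for i using that by (simp add: q_def transpose_def)
        have qm: "q m = k" by (simp add: q_def k_def)
        have "(\<Sum>i\<in>{1..n}. a i (p i)) = a m (p m) + (\<Sum>i\<in>{1..n}-{m}. a i (p i))"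
          using mn by (simp add: sum.remove)
        moreover have "(\<Sum>i\<in>{1..n}. a i (q i)) = a m (q m) + (\<Sum>i\<in>{1..n}-{m}. a i (q i))"
          using mn by (simp add: sum.remove)
        moreover have "(\<Sum>i\<in>{1..n}-{m}. a i (q i)) = (\<Sum>i\<in>{1..n}-{m}. a i (p i))"
          by (rule sum.cong) (auto simp: oth N)
        ultimately show ?thesis using qp qN False m qm m_def by auto
      qed
    qed
    have sN: "(\<Sum>i\<in>{1..N}. a i (p i)) = (\<Sum>i\<in>{1..n}. a i (p i)) + a N k"
      unfolding splitN k_def ..
    show ?thesis
    proof (cases "y N + of_int (j k) * r N \<ge> 0")
      case True
      then have aNk: "a N k = y N + of_int (j k) * r N" by (simp add: a_def)
      obtain q where q: "q permutes {1..N}" "q N = N"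
        "(\<Sum>i\<in>{1..n}. a i (p i)) - (\<Sum>i\<in>{1..n}. a i (q i)) = (if inv p N = N then 0 else a (inv p N) N - a (inv p N) k)"
        using swp[of N] N by auto
      have d: "(\<Sum>i\<in>{1..n}. a i (p i)) - (\<Sum>i\<in>{1..n}. a i (q i)) \<le> r N * (of_int (j N) - of_int (j k))"
      proof (cases "inv p N = N")
        case True then show ?thesis using q(3) jle[of k N] k rN by (simp add: mult_nonneg_nonneg)
      next
        case False
        have "inv p N \<in> {1..N}" using pinv N by auto
        then have "inv p N \<in> {1..n}" using False N by auto
        then show ?thesis using q(3) False key[of "inv p N" k N] k by auto
      qed
      have qr: "q permutes {1..n}"
        using q(1,2) unfolding permutes_def N by (metis atLeastAtMost_iff le_Suc_eq)
      have "(\<Sum>i\<in>{1..n}. a i (q i)) \<le> up n a" by (rule up_ge[OF qr])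
      then have "(\<Sum>i\<in>{1..N}. a i (p i)) \<le> y N + of_int (j N) * r N + up n a"
        using sN aNk d by (simp add: algebra_simps)
      then show ?thesis by linarith
    next
      case False
      then have aNk: "a N k = - y N - of_int (j k) * r N" by (simp add: a_def)
      obtain q where q: "q permutes {1..N}" "q N = 1"
        "(\<Sum>i\<in>{1..n}. a i (p i)) - (\<Sum>i\<in>{1..n}. a i (q i)) = (if inv p 1 = N then 0 else a (inv p 1) 1 - a (inv p 1) k)"
        using swp[of 1] N by auto
      have d: "(\<Sum>i\<in>{1..n}. a i (p i)) - (\<Sum>i\<in>{1..n}. a i (q i)) \<le> r N * (of_int (j k) - of_int (j 1))"
      proof (cases "inv p 1 = N")
        case True then show ?thesis using q(3) jle[of 1 k] k rN by (simp add: mult_nonneg_nonneg)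
      next
        case False
        have "inv p 1 \<in> {1..N}" using pinv N by auto
        then have "inv p 1 \<in> {1..n}" using False N by auto
        moreover have "a (inv p 1) 1 - a (inv p 1) k = - (a (inv p 1) k - a (inv p 1) 1)" by simp
        moreover have "a (inv p 1) 1 - a (inv p 1) k \<le> \<bar>r (inv p 1)\<bar> * \<bar>of_int (j 1) - of_int (j k)\<bar>"
          unfolding a_def by (rule abs_diff_le)
        moreover have "\<bar>of_int (j 1) - of_int (j k)\<bar> = (of_int (j k) - of_int (j 1) :: real)"
          using jle[of 1 k] k by simp
        moreover have "\<bar>r (inv p 1)\<bar> * (of_int (j k) - of_int (j 1)) \<le> r N * (of_int (j k) - of_int (j 1))"
          using rle[of "inv p 1"] \<open>inv p 1 \<in> {1..n}\<close> jle[of 1 k] k by (intro mult_right_mono) auto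
        ultimately show ?thesis using q(3) False by auto
      qed
      have qin: "q i \<in> {2..N}" if "i \<in> {1..n}" for i
      proof -
        have "q i \<in> {1..N}" using permutes_in_image[OF q(1), of i] that N by auto
        moreover have "i \<noteq> N" using that N by auto
        then have "q i \<noteq> q N" using permutes_inj[OF q(1)] by (simp add: inj_eq)
        ultimately show ?thesis using q(2) by auto
      qed
      define q' where "q' = (\<lambda>i. if i \<in> {1..n} then q i - 1 else i)"
      have "inj_on q' {1..n}"
      proof (rule inj_onI)
        fix u v assume uv: "u \<in> {1..n}" "v \<in> {1..n}" "q' u = q' v"
        then have "q u = q v" using qin[of u] qin[of v] by (auto simp: q'_def)
        then show "u = v" using permutes_inj[OF q(1)] by (auto simp: inj_def)
      qed
      moreover have "q' x \<in> {1..n}" if "x \<in> {1..n}" for x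
        using qin[OF that] that N by (auto simp: q'_def)
      moreover have "q' x = x" if "x \<notin> {1..n}" for x using that by (auto simp: q'_def)
      ultimately have qr: "q' permutes {1..n}" by (intro inj_imp_permutes) auto
      have "(\<Sum>i\<in>{1..n}. a i (q i)) = (\<Sum>i\<in>{1..n}. b i (q' i))"
      proof (rule sum.cong)
        fix i assume i: "i \<in> {1..n}"
        then have "Suc (q i - 1) = q i" using qin[OF i] by auto
        then show "a i (q i) = b i (q' i)" using i by (simp add: a_def b_def q'_def)
      qed simp
      also have "\<dots> \<le> up n b" by (rule up_ge[OF qr])
      finally have "(\<Sum>i\<in>{1..N}. a i (p i)) \<le> - y N - of_int (j 1) * r N + up n b"
        using sN aNk d by (simp add: algebra_simps)
      then show ?thesis by linarith
    qed
  qed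
  have "up N a \<le> max (y N + of_int (j N) * r N + up n a) (- y N - of_int (j 1) * r N + up n b)"
  proof -
    obtain p where "p permutes {1..N}" "up N a = (\<Sum>i\<in>{1..N}. a i (p i))" using up_att by blast
    then show ?thesis using ub by simp
  qed
  then have "up N a = max (y N + of_int (j N) * r N + up n a) (- y N - of_int (j 1) * r N + up n b)"
    using lb1 lb2 by linarith
  then show ?thesis unfolding a_def b_def n_def .
qed

end
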